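(* For all integers $n\ge 0$ and $k=0,1,\dots,n$, $$Z^{n,k}(z,\bar z)=\frac{1}{k!}\,\frac{\partial^k}{\partial z^k}\Big[z^{n}\Big(\frac1z-\bar z\Big)^{k}\Big]=\frac{1}{k!}\,\frac{\partial^k}{\partial z^k}\Big[z^{n-k}(1-z\bar z)^{k}\Big],$$ where on the right $z$ and $\bar z$ are treated as independent variables (equivalently, $\partial/\partial z$ is the Wirtinger derivative).
   Context: Identify $\mathbb R^2$ with $\mathbb C$ via $z=x^1+ix^2$, $\bar z=x^1-ix^2$, and use $\frac{\partial}{\partial z}=\frac12\big(\frac{\partial}{\partial x^1}-i\frac{\partial}{\partial x^2}\big)$, $\frac{\partial}{\partial \bar z}=\frac12\big(\frac{\partial}{\partial x^1}+i\frac{\partial}{\partial x^2}\big)$. Zernike polynomials (in the paper's numbering) are defined for integers $n\ge 0$, $0\le k\le n$ by $$Z^{n,k}(z,\bar z)=\sum_{s=0}^{k}\binom{k}{s}\binom{n-k}{s}z^{n-k-s}(1-z\bar z)^s(-\bar z)^{k-s}\quad\text{for }0\le k\le [n/2],$$ and $Z^{n,k}=(-1)^n\,\overline{Z^{n,n-k}}$ for $[n/2]<k\le n$, where $[\cdot]$ is the integer part. (Equivalently $Z^{n,k}=(-1)^k V_{n,n-2k}$ with $V_{n,l}$ the classical Zernike polynomials.) Examples: $Z^{1,0}=z$, $Z^{1,1}=-\bar z$, $Z^{2,1}=1-2z\bar z$. *)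

theory Defs
  imports "HOL-Complex_Analysis.Complex_Analysis"
begin

text \<open>Zernike polynomials in the paper's numbering, as functions of z (with zbar = cnj z).
  zernike_low n k z is the explicit sum, valid for 0 <= k <= [n/2].\<close>

definition zernike_low :: "nat \<Rightarrow> nat \<Rightarrow> complex \<Rightarrow> complex" where
  "zernike_low n k z =
     (\<Sum>s = 0..k. of_nat (k choose s) * of_nat ((n - k) choose s) *
        z ^ (n - k - s) * (1 - z * cnj z) ^ s * (- cnj z) ^ (k - s))"

definition zernike :: "nat \<Rightarrow> nat \<Rightarrow> complex \<Rightarrow> complex" where
  "zernike n k z =
     (if k \<le> n div 2 then zernike_low n k z
      else (-1) ^ n * cnj (zernike_low n (n - k) z))"

end

theory Submission
  imports Defs
begin

lemma poch_choose:
  "pochhammer (of_nat (Suc m - i) :: complex) i = of_nat (fact i * (m choose i))"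
proof (cases "i \<le> m")
  case True
  have "(of_nat (m choose i) :: complex) = of_nat m gchoose i" by (simp add: binomial_gbinomial)
  also have "\<dots> = pochhammer (of_nat m - of_nat i + 1) i / fact i" by (rule gbinomial_pochhammer')
  also have "of_nat m - of_nat i + 1 = (of_nat (Suc m - i) :: complex)" using True by (simp add: of_nat_diff)
  finally show ?thesis by (simp add: field_simps)
next
  case False
  then have "Suc m - i = 0" "i > 0" by auto
  then show ?thesis using False by (simp add: pochhammer_0_left)
qed

lemma deriv_pow: "(deriv ^^ i) (\<lambda>\<zeta>::complex. \<zeta> ^ m) z = pochhammer (of_nat (Suc m - i)) i * z ^ (m - i)"
  using higher_deriv_power[of i 0 m z] by simp

lemma deriv_lin_pow: "(deriv ^^ j) (\<lambda>\<zeta>::complex. (1 - \<zeta> * w) ^ k) z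
   = (-w) ^ j * (pochhammer (of_nat (Suc k - j)) j * (1 - z * w) ^ (k - j))"
proof -
  have e: "(\<lambda>\<zeta>::complex. (1 - \<zeta> * w) ^ k) = (\<lambda>\<zeta>. (\<lambda>x. x ^ k) ((-w) * \<zeta> + 1))"
    by (auto simp: algebra_simps)
  have "(deriv ^^ j) (\<lambda>\<zeta>. (\<lambda>x. x ^ k) ((-w) * \<zeta> + 1)) z = (-w) ^ j * (deriv ^^ j) (\<lambda>x. x ^ k) ((-w) * z + 1)"
    by (rule higher_deriv_compose_linear'[where S=UNIV and T=UNIV]) (auto intro!: holomorphic_intros)
  then show ?thesis unfolding e deriv_pow by (simp add: algebra_simps)
qed

lemma mainA:
  "(deriv ^^ k) (\<lambda>\<zeta>::complex. \<zeta> ^ m * (1 - \<zeta> * w) ^ k) z / of_nat (fact k)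
   = (\<Sum>s = 0..k. of_nat (k choose s) * of_nat (m choose s) *
        z ^ (m - s) * (1 - z * w) ^ s * (- w) ^ (k - s))"
proof -
  have "(deriv ^^ k) (\<lambda>\<zeta>::complex. \<zeta> ^ m * (1 - \<zeta> * w) ^ k) z =
     (\<Sum>i = 0..k. of_nat (k choose i) * (deriv ^^ i) (\<lambda>\<zeta>. \<zeta> ^ m) z * (deriv ^^ (k-i)) (\<lambda>\<zeta>. (1 - \<zeta> * w) ^ k) z)"
    by (rule higher_deriv_mult[where S=UNIV]) (auto intro!: holomorphic_intros)
  also have "\<dots> = (\<Sum>s = 0..k. of_nat (fact k) * (of_nat (k choose s) * of_nat (m choose s) *
        z ^ (m - s) * (1 - z * w) ^ s * (- w) ^ (k - s)))"
  proof (rule sum.cong[OF refl])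
    fix s assume s: "s \<in> {0..k}"
    then have s1: "Suc k - (k - s) = Suc s" "k - (k - s) = s" by auto
    have f: "fact s * fact (k - s) * (k choose s) = (fact k :: nat)"
      using s binomial_fact_lemma by auto
    have f': "(of_nat (fact k) :: complex) = of_nat (fact s) * of_nat (fact (k - s)) * of_nat (k choose s)"
      by (simp only: f[symmetric] of_nat_mult)
    show "of_nat (k choose s) * (deriv ^^ s) (\<lambda>\<zeta>. \<zeta> ^ m) z * (deriv ^^ (k-s)) (\<lambda>\<zeta>. (1 - \<zeta> * w) ^ k) z
      = of_nat (fact k) * (of_nat (k choose s) * of_nat (m choose s) *
        z ^ (m - s) * (1 - z * w) ^ s * (- w) ^ (k - s))"
      unfolding deriv_pow deriv_lin_pow poch_choose
      using poch_choose[of k "k - s"] s1 unfolding f'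
      by (simp add: binomial_symmetric[of s k] s[simplified] algebra_simps)
  qed
  finally show ?thesis by (simp add: sum_distrib_left[symmetric])
qed

lemma low_ext:
  assumes "k \<le> n"
  shows "zernike_low n k z = (\<Sum>s = 0..n. of_nat (k choose s) * of_nat ((n - k) choose s) *
        z ^ (n - k - s) * (1 - z * cnj z) ^ s * (- cnj z) ^ (k - s))"
  unfolding zernike_low_def using assms
  by (intro sum.mono_neutral_left) (auto simp: binomial_eq_0)

lemma neg1_e2: "(-1::complex) ^ (s + a + s + b) = (-1) ^ b * (-1) ^ a"
proof -
  have "(-1::complex) ^ (s + a + s + b) = ((-1)^s * (-1)^s) * ((-1) ^ b * (-1) ^ a)"
    by (simp only: power_add mult_ac)
  also have "(-1::complex)^s * (-1)^s = 1" by (simp flip: power_mult_distrib)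
  finally show ?thesis by simp
qed

lemma t3: fixes z :: complex and s a b :: nat shows
 "(-1) ^ b * (-1) ^ a * (of_nat B * of_nat A *
        cnj z ^ a * W ^ s * (- z) ^ b) =
        of_nat A * of_nat B *
        z ^ b * W ^ s * (- cnj z) ^ a"
  unfolding power_minus[of z] power_minus[of "cnj z"]
  by (simp add: mult_ac) 

lemma low_sym:
  assumes "k \<le> n"
  shows "zernike_low n k z = (-1) ^ n * cnj (zernike_low n (n - k) z)"
proof -
  have nk: "n - (n - k) = k" using assms by simp
  have "cnj (zernike_low n (n - k) z) = (\<Sum>s = 0..n. of_nat ((n - k) choose s) * of_nat (k choose s) *
        cnj z ^ (k - s) * (1 - z * cnj z) ^ s * (- z) ^ (n - k - s))"
    unfolding low_ext[of "n - k" n z, OF diff_le_self] nk cnj_sum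
    by (intro sum.cong refl) (simp add: mult.commute)
  then have "(-1) ^ n * cnj (zernike_low n (n - k) z) = (\<Sum>s = 0..n. (-1) ^ n * (of_nat ((n - k) choose s) * of_nat (k choose s) *
        cnj z ^ (k - s) * (1 - z * cnj z) ^ s * (- z) ^ (n - k - s)))"
    by (simp add: sum_distrib_left)
  also have "\<dots> = (\<Sum>s = 0..n. of_nat (k choose s) * of_nat ((n - k) choose s) *
        z ^ (n - k - s) * (1 - z * cnj z) ^ s * (- cnj z) ^ (k - s))"
  proof (rule sum.cong[OF refl])
    fix s assume "s \<in> {0..n}"
    show "(-1) ^ n * (of_nat ((n - k) choose s) * of_nat (k choose s) *
        cnj z ^ (k - s) * (1 - z * cnj z) ^ s * (- z) ^ (n - k - s)) =
        of_nat (k choose s) * of_nat ((n - k) choose s) *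
        z ^ (n - k - s) * (1 - z * cnj z) ^ s * (- cnj z) ^ (k - s)"
    proof (cases "s \<le> k \<and> s \<le> n - k")
      case True
      define a where "a = k - s"
      define b where "b = n - k - s"
      have ab: "k = s + a" "n = s + a + s + b" using True assms unfolding a_def b_def by auto
      have e1: "n - k - s = b" "k - s = a" using ab by auto
      have e2: "(-1::complex) ^ n = (-1) ^ b * (-1) ^ a" using neg1_e2 ab(2) by metis
      show ?thesis unfolding e1 e2 by (rule t3)
    next
      case False
      then show ?thesis by (auto simp: binomial_eq_0)
    qed
  qed
  finally show ?thesis using low_ext[OF assms] by simp
qed

lemma zernike_eq: "k \<le> n \<Longrightarrow> zernike n k z = zernike_low n k z"
  unfolding zernike_def using low_sym[of k n z] by simp

theorem theorem1:
  fixes n k :: nat and z :: complex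
  assumes "k \<le> n"
  shows "zernike n k z =
           (deriv ^^ k) (\<lambda>\<zeta>. \<zeta> ^ (n - k) * (1 - \<zeta> * cnj z) ^ k) z / of_nat (fact k)
         \<and> (z \<noteq> 0 \<longrightarrow> zernike n k z =
           (deriv ^^ k) (\<lambda>\<zeta>. \<zeta> ^ n * (1 / \<zeta> - cnj z) ^ k) z / of_nat (fact k))"
proof -
  have 1: "zernike n k z =
           (deriv ^^ k) (\<lambda>\<zeta>. \<zeta> ^ (n - k) * (1 - \<zeta> * cnj z) ^ k) z / of_nat (fact k)"
    unfolding zernike_eq[OF assms] mainA zernike_low_def by simp
  have 2: "(deriv ^^ k) (\<lambda>\<zeta>. \<zeta> ^ n * (1 / \<zeta> - cnj z) ^ k) z =
           (deriv ^^ k) (\<lambda>\<zeta>. \<zeta> ^ (n - k) * (1 - \<zeta> * cnj z) ^ k) z" if "z \<noteq> 0"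
  proof (rule higher_deriv_transform_within_open[where S="-{0}"])
    show "(\<lambda>\<zeta>. \<zeta> ^ n * (1 / \<zeta> - cnj z) ^ k) holomorphic_on - {0}"
      by (auto intro!: holomorphic_intros)
    show "(\<lambda>\<zeta>. \<zeta> ^ (n - k) * (1 - \<zeta> * cnj z) ^ k) holomorphic_on - {0}"
      by (auto intro!: holomorphic_intros)
    show "open (- {0::complex})" by auto
    show "z \<in> - {0}" using that by auto
    fix w :: complex assume "w \<in> - {0}"
    then have w: "w \<noteq> 0" by auto
    have "w ^ n = w ^ (n - k) * w ^ k" using assms by (simp add: power_add[symmetric])
    moreover have "w ^ k * (1 / w - cnj z) ^ k = (1 - w * cnj z) ^ k"
      proof -
      have "w * (1 / w - cnj z) = 1 - w * cnj z" using w by (simp add: right_diff_distrib)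
      then show ?thesis by (simp flip: power_mult_distrib)
    qed
    ultimately show "w ^ n * (1 / w - cnj z) ^ k = w ^ (n - k) * (1 - w * cnj z) ^ k"
      by (simp add: mult.assoc)
  qed
  show ?thesis using 1 2 by simp
qed

end
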